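(* Let $V$ be a finite-dimensional real vector space and $A\subset V$ a finite set of nonzero vectors spanning $V$, no two of which are parallel. The following are equivalent: (i) $A$ is indecomposable; (ii) for every basis $B\subset A$ of $V$, the graph $G(B;A)$ is connected; (iii) for some basis $B\subset A$ of $V$, the graph $G(B;A)$ is connected.
   Context: A decomposition of $A$ is a partition $A=A_1\cup A_2$ into nonempty sets with $V_1\cap V_2=0$, where $V_j=\mathrm{span}(A_j)$; $A$ is indecomposable if it has no decomposition. For a basis $B\subset A$, let $[\cdot,\cdot]_B$ be the inner product for which $B$ is orthonormal, and let $G(B;A)$ be the finite graph with vertex set $B$ and an edge between distinct $x,y\in B$ whenever there is $z\in A\setminus B$ with $[x,z]_B\ne0$ and $[y,z]_B\ne0$. *)

theory Defs
  imports "HOL-Analysis.Analysis"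
begin

definition is_decomposition :: "'a::real_vector set \<Rightarrow> 'a set \<Rightarrow> 'a set \<Rightarrow> bool" where
  "is_decomposition A A1 A2 \<longleftrightarrow>
     A = A1 \<union> A2 \<and> A1 \<inter> A2 = {} \<and> A1 \<noteq> {} \<and> A2 \<noteq> {} \<and>
     span A1 \<inter> span A2 = {0}"

definition indecomposable :: "'a::real_vector set \<Rightarrow> bool" where
  "indecomposable A \<longleftrightarrow> \<not> (\<exists>A1 A2. is_decomposition A A1 A2)"

definition is_basis_in :: "'a::real_vector set \<Rightarrow> 'a set \<Rightarrow> bool" where
  "is_basis_in B A \<longleftrightarrow> B \<subseteq> A \<and> independent B \<and> span B = UNIV"

definition inner_B :: "'a::real_vector set \<Rightarrow> 'a \<Rightarrow> 'a \<Rightarrow> real" where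
  "inner_B B u v = (\<Sum>b\<in>B. real_vector.representation B u b * real_vector.representation B v b)"

definition G_edge :: "'a::real_vector set \<Rightarrow> 'a set \<Rightarrow> 'a \<Rightarrow> 'a \<Rightarrow> bool" where
  "G_edge B A x y \<longleftrightarrow> x \<in> B \<and> y \<in> B \<and> x \<noteq> y \<and>
     (\<exists>z\<in>A - B. inner_B B x z \<noteq> 0 \<and> inner_B B y z \<noteq> 0)"

definition G_connected :: "'a::real_vector set \<Rightarrow> 'a set \<Rightarrow> bool" where
  "G_connected B A \<longleftrightarrow>
     (\<forall>x\<in>B. \<forall>y\<in>B. (x, y) \<in> {(u, v). G_edge B A u v}\<^sup>*)"

end

theory Submission
  imports Defs
begin

lemma supp_sub:
  fixes B :: "'a::euclidean_space set"
  assumes "independent B" "S \<subseteq> B" "v \<in> span S" "real_vector.representation B v b \<noteq> 0"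
  shows "b \<in> S"
  using assms real_vector.representation_extend[OF assms(1) assms(3) assms(2)]
    real_vector.representation_ne_zero by metis

lemma in_span_supp:
  fixes B :: "'a::euclidean_space set"
  assumes "independent B" "span B = UNIV"
    and "\<And>b. real_vector.representation B z b \<noteq> 0 \<Longrightarrow> b \<in> S"
  shows "z \<in> span S"
proof -
  have "z = (\<Sum>b | real_vector.representation B z b \<noteq> 0. real_vector.representation B z b *\<^sub>R b)"
    using real_vector.sum_nonzero_representation_eq[OF assms(1), of z] assms(2) by simp
  also have "\<dots> \<in> span S"
    by (intro span_sum span_mul span_base assms(3)) auto
  finally show ?thesis .
qed

lemma inner_B_basis:
  fixes B :: "'a::euclidean_space set"
  assumes "independent B" "x \<in> B"
  shows "inner_B B x z = real_vector.representation B z x"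
proof -
  have fin: "finite B" using assms(1) by (rule finiteI_independent)
  have "inner_B B x z = (\<Sum>b\<in>B. (if b = x then real_vector.representation B z b else 0))"
    unfolding inner_B_def real_vector.representation_basis[OF assms]
    by (rule sum.cong) auto
  also have "\<dots> = real_vector.representation B z x"
    using fin assms(2) by (simp add: sum.delta')
  finally show ?thesis .
qed

lemma disjoint_spans:
  fixes B :: "'a::euclidean_space set"
  assumes "independent B" "span B = UNIV" "B1 \<subseteq> B" "B2 \<subseteq> B" "B1 \<inter> B2 = {}"
    "v \<in> span B1" "v \<in> span B2"
  shows "v = 0"
proof -
  have "\<And>b. real_vector.representation B v b = 0"
    using supp_sub[OF assms(1,3,6)] supp_sub[OF assms(1,4,7)] assms(5) by blast
  then have "v \<in> span {}" using in_span_supp[OF assms(1,2), of v "{}"] by simp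
  then show ?thesis by simp
qed

lemma dir1:
  fixes A :: "'a::euclidean_space set"
  assumes "indecomposable A" "is_basis_in B A"
  shows "G_connected B A"
proof (rule ccontr)
  assume "\<not> G_connected B A"
  then obtain x y where xy: "x \<in> B" "y \<in> B" "(x, y) \<notin> {(u, v). G_edge B A u v}\<^sup>*"
    unfolding G_connected_def by blast
  let ?R = "{(u, v). G_edge B A u v}\<^sup>*"
  let ?r = "real_vector.representation B"
  have ind: "independent B" and sp: "span B = UNIV" and BA: "B \<subseteq> A"
    using assms(2) by (auto simp: is_basis_in_def)
  define B1 where "B1 = {b \<in> B. (x, b) \<in> ?R}"
  define B2 where "B2 = B - B1"
  define A1 where "A1 = B1 \<union> {z \<in> A - B. \<exists>b\<in>B1. ?r z b \<noteq> 0}"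
  define A2 where "A2 = A - A1"
  have B1B: "B1 \<subseteq> B" unfolding B1_def by blast
  have supp1: "b \<in> B1" if "z \<in> A1 - B" "?r z b \<noteq> 0" for z b
  proof -
    from that obtain b1 where b1: "b1 \<in> B1" "?r z b1 \<noteq> 0" "z \<in> A - B"
      using B1B unfolding A1_def by blast
    have bB: "b \<in> B" using that(2) real_vector.representation_ne_zero by metis
    show ?thesis
    proof (cases "b = b1")
      case True then show ?thesis using b1 by simp
    next
      case False
      have b1B: "b1 \<in> B" using b1 B1_def by auto
      have "G_edge B A b1 b"
        unfolding G_edge_def using False b1 bB b1B that(2)
        inner_B_basis[OF ind b1B] inner_B_basis[OF ind bB] by auto
      then have "(x, b) \<in> ?R" using b1 B1_def
        by (auto intro: rtrancl_into_rtrancl)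
      then show ?thesis using bB B1_def by auto
    qed
  qed
  have A1s: "A1 \<subseteq> span B1"
  proof
    fix z assume z: "z \<in> A1"
    show "z \<in> span B1"
    proof (cases "z \<in> B")
      case True then have "z \<in> B1" using z A1_def by auto
      then show ?thesis by (rule span_base)
    next
      case False
      show ?thesis using in_span_supp[OF ind sp] supp1 z False by blast
    qed
  qed
  have A2s: "A2 \<subseteq> span B2"
  proof
    fix z assume z: "z \<in> A2"
    show "z \<in> span B2"
    proof (cases "z \<in> B")
      case True then have "z \<in> B2" using z A1_def A2_def B2_def by auto
      then show ?thesis by (rule span_base)
    next
      case False
      have "b \<in> B2" if "?r z b \<noteq> 0" for b
      proof -
        have "b \<in> B" using that real_vector.representation_ne_zero by metis
        moreover have "b \<notin> B1" using z False that unfolding A2_def A1_def by auto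
        ultimately show ?thesis using B2_def by auto
      qed
      then show ?thesis using in_span_supp[OF ind sp] by blast
    qed
  qed
  have "is_decomposition A A1 A2"
    unfolding is_decomposition_def
  proof (intro conjI)
    show "A = A1 \<union> A2" using BA unfolding A2_def A1_def B1_def by auto
    show "A1 \<inter> A2 = {}" unfolding A2_def by auto
    show "A1 \<noteq> {}" using xy(1) unfolding A1_def B1_def by auto
    show "A2 \<noteq> {}" using xy BA unfolding A2_def A1_def B1_def by auto
    show "span A1 \<inter> span A2 = {0}"
    proof -
      have "v = 0" if "v \<in> span A1" "v \<in> span A2" for v
      proof (rule disjoint_spans[OF ind sp, of B1 B2])
        show "v \<in> span B1" using that(1) span_minimal[OF A1s subspace_span] by blast
        show "v \<in> span B2" using that(2) span_minimal[OF A2s subspace_span] by blast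
      qed (auto simp: B1_def B2_def)
      then show ?thesis by (auto simp: span_zero)
    qed
  qed
  then show False using assms(1) unfolding indecomposable_def by blast
qed

lemma dir2:
  fixes A :: "'a::euclidean_space set"
  assumes "0 \<notin> A" "is_basis_in B A" "G_connected B A"
  shows "indecomposable A"
  unfolding indecomposable_def
proof
  assume "\<exists>A1 A2. is_decomposition A A1 A2"
  then obtain A1 A2 where d: "A = A1 \<union> A2" "A1 \<inter> A2 = {}" "A1 \<noteq> {}" "A2 \<noteq> {}"
    "span A1 \<inter> span A2 = {0}" unfolding is_decomposition_def by blast
  have ind: "independent B" and sp: "span B = UNIV" and BA: "B \<subseteq> A"
    using assms(2) by (auto simp: is_basis_in_def)
  let ?r = "real_vector.representation B"
  define B1 where "B1 = B \<inter> A1"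
  define B2 where "B2 = B \<inter> A2"
  have key: "span Ai \<subseteq> span Bi"
    if h: "span Ai \<inter> span Aj = {0}" "Bi = B \<inter> Ai" "Bj = B \<inter> Aj" "B \<subseteq> Ai \<union> Aj"
    for Ai Aj Bi Bj
  proof
    fix v assume v: "v \<in> span Ai"
    have "Bi \<union> Bj = B" using h(2-4) by blast
    then have "v \<in> span (Bi \<union> Bj)" using sp by simp
    then obtain u w where uw: "v = u + w" "u \<in> span Bi" "w \<in> span Bj"
      unfolding span_Un by blast
    have "u \<in> span Ai" using uw(2) h(2) span_mono[of Bi Ai] by blast
    then have "w \<in> span Ai" using v uw(1) span_diff[of v Ai u] by simp
    moreover have "w \<in> span Aj" using uw(3) h(3) span_mono[of Bj Aj] by blast
    ultimately have "w = 0" using h(1) by blast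
    then show "v \<in> span Bi" using uw by simp
  qed
  have k1: "span A1 \<subseteq> span B1" using key[of A1 A2 B1 B2] d BA B1_def B2_def by auto
  have k2: "span A2 \<subseteq> span B2" using key[of A2 A1 B2 B1] d BA B1_def B2_def by (auto simp: Int_commute)
  have ne: "Bi \<noteq> {}" if th: "span Ai \<subseteq> span Bi" "Ai \<noteq> {}" "Ai \<subseteq> A" for Ai Bi
  proof
    assume "Bi = {}"
    obtain a where a: "a \<in> Ai" using th(2) by blast
    then have "a \<in> span {}" using th(1) \<open>Bi = {}\<close> span_base[of a Ai] by blast
    then show False using assms(1) th(3) a by auto
  qed
  obtain x where x: "x \<in> B1" using ne[OF k1] d by blast
  obtain y where y: "y \<in> B2" using ne[OF k2] d by blast
  have clos: "v \<in> B1" if "G_edge B A u v" "u \<in> B1" for u v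
  proof -
    from that(1) obtain z where z: "z \<in> A - B" "u \<in> B" "v \<in> B"
      "inner_B B u z \<noteq> 0" "inner_B B v z \<noteq> 0" unfolding G_edge_def by blast
    have ru: "?r z u \<noteq> 0" and rv: "?r z v \<noteq> 0"
      using z inner_B_basis[OF ind] by auto
    show ?thesis
    proof (cases "z \<in> A1")
      case True
      then have "z \<in> span B1" using k1 span_base by blast
      then show ?thesis using supp_sub[OF ind _ _ rv] B1_def by auto
    next
      case False
      then have "z \<in> A2" using z d by auto
      then have "z \<in> span B2" using k2 span_base by blast
      then have "u \<in> B2" using supp_sub[OF ind _ _ ru] B2_def by auto
      then show ?thesis using that(2) d(2) B1_def B2_def by auto
    qed
  qed
  have "(x, y) \<in> {(u, v). G_edge B A u v}\<^sup>*"
    using assms(3) x y B1_def B2_def unfolding G_connected_def by auto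
  then have "y \<in> B1" using x
    by (induction rule: rtrancl_induct) (auto intro: clos)
  then show False using y d(2) B1_def B2_def by auto
qed

theorem mainTheorem10:
  fixes A :: "'a::euclidean_space set"
  assumes "finite A"
    and "0 \<notin> A"
    and "span A = UNIV"
    and "\<And>x y c. x \<in> A \<Longrightarrow> y \<in> A \<Longrightarrow> x \<noteq> y \<Longrightarrow> x \<noteq> c *\<^sub>R y"
  shows "(indecomposable A \<longleftrightarrow> (\<forall>B. is_basis_in B A \<longrightarrow> G_connected B A))
       \<and> ((\<forall>B. is_basis_in B A \<longrightarrow> G_connected B A) \<longleftrightarrow> (\<exists>B. is_basis_in B A \<and> G_connected B A))"
proof -
  obtain B where "B \<subseteq> A" "independent B" "A \<subseteq> span B"
    using real_vector.maximal_independent_subset by blast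
  then have ex: "is_basis_in B A" unfolding is_basis_in_def
    using assms(3) span_minimal[of A "span B"] subspace_span[of B] by auto
  show ?thesis using dir1 dir2[OF assms(2)] ex by blast
qed

end
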